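(* Let $\alpha\le0$ and $\beta<0$. Then for every integer $n\ge2$ and every $1\le k\le n-1$, \[ \big(S_{\alpha,\beta}(n,k)\big)^2\ge\Big(1+\frac1k\Big)\Big(1+\frac1{n-k}\Big)S_{\alpha,\beta}(n,k+1)\,S_{\alpha,\beta}(n,k-1); \] in particular the sequence $(S_{\alpha,\beta}(n,k))_{0\le k\le n}$ is log-concave.
   Context: For real $a$ and integer $n\ge 1$, $\langle a\rangle_n:=a(a+1)\cdots(a+n-1)$ and $\langle a\rangle_0:=1$. For real $\alpha,\beta$ and integers $0\le k\le n$, $S_{\alpha,\beta}(n,k):=\frac{1}{k!}\sum_{j=0}^{k}(-1)^{k-j}\binom{k}{j}\langle-\alpha-\beta j\rangle_n$. *)

theory Defs
  imports Complex_Main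
begin

definition S_ab :: "real \<Rightarrow> real \<Rightarrow> nat \<Rightarrow> nat \<Rightarrow> real" where
  "S_ab \<alpha> \<beta> n k = (1 / fact k) *
     (\<Sum>j=0..k. (-1) ^ (k - j) * real (k choose j) * pochhammer (- \<alpha> - \<beta> * real j) n)"

end

theory Submission
  imports Defs
begin

definition TT :: "real \<Rightarrow> real \<Rightarrow> nat \<Rightarrow> nat \<Rightarrow> real" where
  "TT \<alpha> \<beta> n k = (\<Sum>j=0..k. (-1) ^ (k - j) * real (k choose j) * pochhammer (- \<alpha> - \<beta> * real j) n)"

lemma S_TT: "S_ab \<alpha> \<beta> n k = TT \<alpha> \<beta> n k / fact k"
  unfolding S_ab_def TT_def by simp

lemma TT_rec:
  "TT \<alpha> \<beta> (Suc n) (Suc k) = (- \<alpha> + real n - \<beta> * real (Suc k)) * TT \<alpha> \<beta> n (Suc k)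
      - \<beta> * real (Suc k) * TT \<alpha> \<beta> n k"
proof -
  define K where "K = Suc k"
  define c where "c = - \<alpha> + real n"
  define f where "f j = pochhammer (- \<alpha> - \<beta> * real j) n" for j
  have "TT \<alpha> \<beta> (Suc n) K = (\<Sum>j=0..K. (-1) ^ (K - j) * real (K choose j) * (f j * ((c - \<beta> * real K) + \<beta> * (real K - real j))))"
    unfolding TT_def f_def c_def by (intro sum.cong refl) (simp add: pochhammer_Suc algebra_simps)
  also have "\<dots> = (c - \<beta> * real K) * TT \<alpha> \<beta> n K + \<beta> * (\<Sum>j=0..K. (-1) ^ (K - j) * (real (K choose j) * (real K - real j)) * f j)"
    unfolding TT_def f_def sum_distrib_left sum.distrib[symmetric]
    by (intro sum.cong refl) (simp add: algebra_simps)
  also have "(\<Sum>j=0..K. (-1) ^ (K - j) * (real (K choose j) * (real K - real j)) * f j)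
      = (\<Sum>j=0..K. (-1) ^ (K - j) * (real K * real (k choose j)) * f j)"
  proof (intro sum.cong refl)
    fix j assume "j \<in> {0..K}"
    hence "j \<le> K" by simp
    have "(K - j) * (K choose j) = K * (k choose j)"
      using binomial_absorb_comp[of K j] by (simp add: K_def)
    hence "real (K - j) * real (K choose j) = real K * real (k choose j)"
      by (metis of_nat_mult)
    hence "real (K choose j) * (real K - real j) = real K * real (k choose j)"
      using \<open>j \<le> K\<close> by (simp add: of_nat_diff algebra_simps)
    thus "(-1) ^ (K - j) * (real (K choose j) * (real K - real j)) * f j = (-1) ^ (K - j) * (real K * real (k choose j)) * f j"
      by simp
  qed
  also have "\<dots> = (\<Sum>j=0..k. (-1) ^ (K - j) * (real K * real (k choose j)) * f j)"
    by (simp add: K_def)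
  also have "\<dots> = - real K * TT \<alpha> \<beta> n k"
    unfolding TT_def f_def sum_distrib_left
    by (intro sum.cong refl) (simp add: K_def Suc_diff_le algebra_simps)
  finally show ?thesis unfolding K_def c_def by (simp add: algebra_simps)
qed

lemma S_rec:
  "S_ab \<alpha> \<beta> (Suc n) (Suc k) = (- \<alpha> + real n - \<beta> * real (Suc k)) * S_ab \<alpha> \<beta> n (Suc k)
      - \<beta> * S_ab \<alpha> \<beta> n k"
proof -
  have F: "fact (Suc k) = real (Suc k) * fact k" by simp
  have "S_ab \<alpha> \<beta> (Suc n) (Suc k) = (- \<alpha> + real n - \<beta> * real (Suc k)) * (TT \<alpha> \<beta> n (Suc k) / fact (Suc k))
      - \<beta> * (real (Suc k) * TT \<alpha> \<beta> n k / fact (Suc k))"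
    unfolding S_TT TT_rec by (simp add: diff_divide_distrib)
  also have "real (Suc k) * TT \<alpha> \<beta> n k / fact (Suc k) = TT \<alpha> \<beta> n k / fact k"
    unfolding F by (simp del: of_nat_Suc)
  finally show ?thesis unfolding S_TT .
qed

lemma S_zero: "S_ab \<alpha> \<beta> n 0 = pochhammer (- \<alpha>) n"
  unfolding S_ab_def by simp

lemma S_0_Suc: "S_ab \<alpha> \<beta> 0 (Suc k) = 0"
proof -
  have "(\<Sum>j=0..Suc k. (-1) ^ (Suc k - j) * real (Suc k choose j)) = (\<Sum>j\<le>Suc k. real (Suc k choose j) * 1 ^ j * (- 1) ^ (Suc k - j))"
    by (intro sum.cong) (auto simp: atLeast0AtMost)
  also have "\<dots> = (1 + -1) ^ Suc k" by (rule binomial_ring[symmetric])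
  finally show ?thesis unfolding S_ab_def by simp
qed


lemma poch_nonneg: "(x::real) \<ge> 0 \<Longrightarrow> pochhammer x n \<ge> 0"
  by (induction n) (auto simp: pochhammer_Suc)

lemma S_gt: "n < k \<Longrightarrow> S_ab \<alpha> \<beta> n k = 0"
proof (induction n arbitrary: k)
  case 0
  then obtain k' where "k = Suc k'" by (cases k) auto
  thus ?case by (simp add: S_0_Suc)
next
  case (Suc n)
  then obtain k' where k: "k = Suc k'" by (cases k) auto
  with Suc show ?case by (simp add: S_rec)
qed

lemma S_nonneg:
  assumes "\<alpha> \<le> 0" "\<beta> < 0"
  shows "S_ab \<alpha> \<beta> n k \<ge> 0"
proof (induction n arbitrary: k)
  case 0
  thus ?case by (cases k) (auto simp: S_0_Suc S_zero)
next
  case (Suc n)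
  show ?case
  proof (cases k)
    case 0
    thus ?thesis using assms by (simp add: S_zero poch_nonneg)
  next
    case (Suc k')
    have "- \<beta> * real (Suc k') \<ge> 0" using assms by (intro mult_nonneg_nonneg) auto
    hence c: "- \<alpha> + real n - \<beta> * real (Suc k') \<ge> 0" using assms by simp
    have "(- \<alpha> + real n - \<beta> * real (Suc k')) * S_ab \<alpha> \<beta> n (Suc k') \<ge> 0"
      using c Suc.IH[of "Suc k'"] by simp
    moreover have "- \<beta> * S_ab \<alpha> \<beta> n k' \<ge> 0" using Suc.IH[of k'] assms by (intro mult_nonneg_nonneg) auto
    ultimately show ?thesis unfolding Suc S_rec by simp
  qed
qed

lemma S_pos:
  assumes "\<alpha> \<le> 0" "\<beta> < 0"
  shows "1 \<le> k \<Longrightarrow> k \<le> n \<Longrightarrow> S_ab \<alpha> \<beta> n k > 0"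
proof (induction n arbitrary: k)
  case 0
  thus ?case by simp
next
  case (Suc n)
  then obtain k' where k: "k = Suc k'" by (cases k) auto
  have "- \<beta> * real (Suc k') > 0" using assms by (intro mult_pos_pos) auto
  hence c: "- \<alpha> + real n - \<beta> * real (Suc k') > 0" using assms by simp
  have n1: "S_ab \<alpha> \<beta> n (Suc k') \<ge> 0" "S_ab \<alpha> \<beta> n k' \<ge> 0" using S_nonneg assms by auto
  show ?case
  proof (cases "k' \<ge> 1")
    case True
    hence "S_ab \<alpha> \<beta> n k' > 0" using Suc k by auto
    hence "- \<beta> * S_ab \<alpha> \<beta> n k' > 0" using assms by (intro mult_pos_pos) auto
    moreover have "(- \<alpha> + real n - \<beta> * real (Suc k')) * S_ab \<alpha> \<beta> n (Suc k') \<ge> 0"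
      using c n1 by simp
    ultimately show ?thesis unfolding k S_rec by simp
  next
    case False
    hence k0: "k' = 0" by simp
    show ?thesis
    proof (cases n)
      case 0
      then show ?thesis unfolding k k0 S_rec using assms by (simp add: S_0_Suc S_zero)
    next
      case (Suc n')
      hence "S_ab \<alpha> \<beta> n (Suc k') > 0" using Suc.IH[of "Suc k'"] k0 by simp
      hence "(- \<alpha> + real n - \<beta> * real (Suc k')) * S_ab \<alpha> \<beta> n (Suc k') > 0"
        using c by simp
      moreover have "- \<beta> * S_ab \<alpha> \<beta> n k' \<ge> 0" using n1 assms by (intro mult_nonneg_nonneg) auto
      ultimately show ?thesis unfolding k S_rec by simp
    qed
  qed
qed

definition uu :: "real \<Rightarrow> real \<Rightarrow> nat \<Rightarrow> nat \<Rightarrow> real" where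
  "uu \<alpha> \<beta> n k = S_ab \<alpha> \<beta> n k / real (n choose k)"

lemma S_uu: "S_ab \<alpha> \<beta> n k = real (n choose k) * uu \<alpha> \<beta> n k"
proof (cases "k \<le> n")
  case True
  hence "real (n choose k) > 0" by simp
  thus ?thesis unfolding uu_def by simp
next
  case False
  thus ?thesis by (simp add: S_gt uu_def)
qed

lemma uu_nonneg: "\<alpha> \<le> 0 \<Longrightarrow> \<beta> < 0 \<Longrightarrow> uu \<alpha> \<beta> n k \<ge> 0"
  unfolding uu_def using S_nonneg by simp

lemma uu_pos: "\<alpha> \<le> 0 \<Longrightarrow> \<beta> < 0 \<Longrightarrow> 1 \<le> k \<Longrightarrow> k \<le> n \<Longrightarrow> uu \<alpha> \<beta> n k > 0"
  unfolding uu_def using S_pos by simp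

lemma uu_gt: "n < k \<Longrightarrow> uu \<alpha> \<beta> n k = 0"
  unfolding uu_def by (simp add: S_gt)

lemma bin1: "Suc k * (n choose Suc k) = (n - k) * (n choose k)"
  by (simp only: binomial_absorption binomial_absorb_comp)

lemma uu_rec:
  assumes "j \<le> Suc n"
  shows "real (Suc n) * uu \<alpha> \<beta> (Suc n) j =
    (- \<alpha> + real n - \<beta> * real j) * (real (Suc n) - real j) * uu \<alpha> \<beta> n j
    + (- \<beta>) * real j * uu \<alpha> \<beta> n (j - 1)"
proof (cases j)
  case 0
  then show ?thesis unfolding uu_def by (simp add: S_zero pochhammer_Suc algebra_simps)
next
  case (Suc k)
  define N where "N = real (Suc n choose Suc k)"
  have "Suc k \<le> Suc n" using assms Suc by simp
  hence "(Suc n choose Suc k) > 0" by (rule zero_less_binomial)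
  hence Npos: "N > 0" by (simp only: N_def of_nat_0_less_iff)
  have e1: "real (Suc n) * real (n choose k) = N * real (Suc k)"
    unfolding N_def by (metis Suc_times_binomial_eq of_nat_mult)
  have e2: "real (Suc n) * real (n choose Suc k) = N * (real (Suc n) - real (Suc k))"
  proof -
    have "(Suc n - Suc k) * (Suc n choose Suc k) = Suc n * (n choose Suc k)"
      using binomial_absorb_comp[of "Suc n" "Suc k"] by simp
    hence "real (Suc n - Suc k) * N = real (Suc n) * real (n choose Suc k)"
      unfolding N_def by (metis of_nat_mult)
    thus ?thesis using assms Suc by (simp add: of_nat_diff algebra_simps)
  qed
  have "N * uu \<alpha> \<beta> (Suc n) (Suc k) = (- \<alpha> + real n - \<beta> * real (Suc k)) * (real (n choose Suc k) * uu \<alpha> \<beta> n (Suc k))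
      - \<beta> * (real (n choose k) * uu \<alpha> \<beta> n k)"
    using S_rec[of \<alpha> \<beta> n k] unfolding S_uu N_def by simp
  note H0 = this
  have "real (Suc n) * (N * uu \<alpha> \<beta> (Suc n) (Suc k)) = (- \<alpha> + real n - \<beta> * real (Suc k)) * ((real (Suc n) * real (n choose Suc k)) * uu \<alpha> \<beta> n (Suc k))
      - \<beta> * ((real (Suc n) * real (n choose k)) * uu \<alpha> \<beta> n k)"
    unfolding H0 by (simp only: algebra_simps)
  note H = this[unfolded e1 e2]
  have "N * (real (Suc n) * uu \<alpha> \<beta> (Suc n) (Suc k)) = N * ((- \<alpha> + real n - \<beta> * real (Suc k)) * (real (Suc n) - real (Suc k)) * uu \<alpha> \<beta> n (Suc k)
      + (- \<beta>) * real (Suc k) * uu \<alpha> \<beta> n k)"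
    using H by (simp add: algebra_simps)
  hence "real (Suc n) * uu \<alpha> \<beta> (Suc n) (Suc k) = (- \<alpha> + real n - \<beta> * real (Suc k)) * (real (Suc n) - real (Suc k)) * uu \<alpha> \<beta> n (Suc k)
      + (- \<beta>) * real (Suc k) * uu \<alpha> \<beta> n k"
    using Npos by simp
  thus ?thesis using Suc by simp
qed


lemma key:
  fixes b c kk R X Y Z W :: real
  assumes b: "b > 0" and c: "c \<ge> 0" and kk: "kk \<ge> 1" and R: "R \<ge> 1"
    and X: "X \<ge> 0" and Y: "Y \<ge> 0" and Z: "Z \<ge> 0" and W: "W \<ge> 0"
    and h1: "Y * W \<le> X^2" and h2: "(kk - 1) * (Z * X) \<le> (kk - 1) * Y^2"
    and h3: "(kk - 1) * (Z * W) \<le> (kk - 1) * (Y * X)"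
  shows "((c + b*(kk-1))*(R+1)*Y + b*(kk-1)*Z) * ((c + b*(kk+1))*(R-1)*W + b*(kk+1)*X)
           \<le> ((c + b*kk)*R*X + b*kk*Y)^2"
proof -
  define P1 where "P1 = (c + b*(kk-1))*(R+1)"
  define P2 where "P2 = (c + b*(kk+1))*(R-1)"
  have P1: "P1 \<ge> 0" unfolding P1_def using b c kk R by (intro mult_nonneg_nonneg) auto
  have P2: "P2 \<ge> 0" unfolding P2_def using b c kk R by (intro mult_nonneg_nonneg) auto
  have eq: "((c + b*(kk-1))*(R+1)*Y + b*(kk-1)*Z) * ((c + b*(kk+1))*(R-1)*W + b*(kk+1)*X)
     = P1*P2*(Y*W) + P1*(b*(kk+1))*(Y*X) + b*P2*((kk-1)*(Z*W)) + b*(b*(kk+1))*((kk-1)*(Z*X))"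
    unfolding P1_def P2_def by algebra
  have i1: "P1*P2*(Y*W) \<le> P1*P2*X^2" by (rule mult_left_mono[OF h1]) (use P1 P2 in simp)
  have i2: "b*P2*((kk-1)*(Z*W)) \<le> b*P2*((kk-1)*(Y*X))" by (rule mult_left_mono[OF h3]) (use P2 b in simp)
  have i3: "b*(b*(kk+1))*((kk-1)*(Z*X)) \<le> b*(b*(kk+1))*((kk-1)*Y^2)" 
    by (rule mult_left_mono[OF h2]) (use b kk in simp)
  have eq2: "((c + b*kk)*R*X + b*kk*Y)^2 = P1*P2*X^2 + P1*(b*(kk+1))*(Y*X) + b*P2*((kk-1)*(Y*X))
       + b*(b*(kk+1))*((kk-1)*Y^2)
       + ((b*Y - c*X)^2 + (2*b*c*kk + b^2*(kk^2-1) + b^2*R^2)*X^2 + 2*b^2*R*X*Y)"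
    unfolding P1_def P2_def by algebra
  have s1: "(2*b*c*kk + b^2*(kk^2-1) + b^2*R^2) \<ge> 0"
  proof -
    have "kk^2 \<ge> 1" using kk by (simp add: one_le_power)
    hence "b^2*(kk^2-1) \<ge> 0" by simp
    moreover have "2*b*c*kk \<ge> 0" using b c kk by simp
    moreover have "b^2*R^2 \<ge> 0" by simp
    ultimately show ?thesis by linarith
  qed
  have "(2*b*c*kk + b^2*(kk^2-1) + b^2*R^2)*X^2 \<ge> 0" using s1 by simp
  moreover have "2*b^2*R*X*Y \<ge> 0" using b R X Y by simp
  moreover have "(b*Y - c*X)^2 \<ge> 0" by simp
  ultimately show ?thesis unfolding eq eq2 using i1 i2 i3 by linarith
qed


lemma uu_LC:
  assumes a: "\<alpha> \<le> 0" and bb: "\<beta> < 0"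
  shows "1 \<le> k \<Longrightarrow> k < n \<Longrightarrow> uu \<alpha> \<beta> n (k-1) * uu \<alpha> \<beta> n (k+1) \<le> (uu \<alpha> \<beta> n k)^2"
proof (induction n arbitrary: k)
  case 0
  thus ?case by simp
next
  case (Suc n)
  have k1: "1 \<le> k" and kn: "k \<le> n" using Suc.prems by auto
  define X where "X = uu \<alpha> \<beta> n k"
  define Y where "Y = uu \<alpha> \<beta> n (k-1)"
  define Z where "Z = uu \<alpha> \<beta> n (k-2)"
  define W where "W = uu \<alpha> \<beta> n (k+1)"
  define b where "b = - \<beta>"
  define c where "c = - \<alpha> + real n"
  define kk where "kk = real k"
  define m where "m = real (Suc n)"
  define R where "R = m - kk"
  have X0: "X \<ge> 0" and Y0: "Y \<ge> 0" and Z0: "Z \<ge> 0" and W0: "W \<ge> 0"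
    unfolding X_def Y_def Z_def W_def using uu_nonneg[OF a bb] by auto
  have hW: "Y * W \<le> X^2"
  proof (cases "k < n")
    case True
    thus ?thesis using Suc.IH[OF k1] unfolding X_def Y_def W_def by simp
  next
    case False
    hence "W = 0" unfolding W_def using kn by (simp add: uu_gt)
    thus ?thesis by simp
  qed
  have h2: "(kk - 1) * (Z * X) \<le> (kk - 1) * Y^2"
  proof (cases "k = 1")
    case True
    thus ?thesis unfolding kk_def by simp
  next
    case False
    hence "1 \<le> k - 1" "k - 1 < n" using k1 kn by auto
    from Suc.IH[OF this] have "Z * X \<le> Y^2"
      unfolding X_def Y_def Z_def using False k1 by (simp add: numeral_2_eq_2)
    moreover have "kk - 1 \<ge> 0" unfolding kk_def using k1 by simp
    ultimately show ?thesis by (rule mult_left_mono)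
  qed
  have h3: "(kk - 1) * (Z * W) \<le> (kk - 1) * (Y * X)"
  proof (cases "k = 1")
    case True
    thus ?thesis unfolding kk_def by simp
  next
    case False
    have kk1: "kk - 1 \<ge> 0" unfolding kk_def using k1 by simp
    show ?thesis
    proof (cases "k < n")
      case False
      hence "W = 0" unfolding W_def using kn by (simp add: uu_gt)
      thus ?thesis using kk1 X0 Y0 by simp
    next
      case True
      have "1 \<le> k - 1" "k - 1 < n" using k1 kn False by auto
      from Suc.IH[OF this] have ZX: "Z * X \<le> Y^2"
        unfolding X_def Y_def Z_def using False k1 by (simp add: numeral_2_eq_2)
      have YW: "Y * W \<le> X^2" using Suc.IH[OF k1 True] unfolding X_def Y_def W_def by simp
      have Xp: "X > 0" unfolding X_def using uu_pos[OF a bb k1 kn] .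
      have Yp: "Y > 0" unfolding Y_def using uu_pos[OF a bb, of "k-1" n] False k1 kn by simp
      have "(Z * X) * (Y * W) \<le> Y^2 * X^2"
        using ZX YW Z0 X0 Y0 W0 by (intro mult_mono) auto
      hence "(Z * W) * (X * Y) \<le> (Y * X) * (X * Y)" by (simp add: power2_eq_square algebra_simps)
      hence "Z * W \<le> Y * X" using Xp Yp by (simp add: mult.commute)
      thus ?thesis using kk1 by (rule mult_left_mono)
    qed
  qed
  have r1: "m * uu \<alpha> \<beta> (Suc n) (k-1) = (c + b*(kk-1))*(R+1)*Y + b*(kk-1)*Z"
  proof -
    obtain j where kj: "k = Suc j" using k1 by (cases k) auto
    have e: "kk - 1 = real j" "R + 1 = real (Suc n) - real j" unfolding kk_def R_def m_def kj by simp_all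
    have yz: "Y = uu \<alpha> \<beta> n j" "Z = uu \<alpha> \<beta> n (j-1)" unfolding Y_def Z_def kj by simp_all
    have "c + b * real j = - \<alpha> + real n - \<beta> * real j" unfolding b_def c_def by simp
    thus ?thesis unfolding e yz m_def using uu_rec[of j n \<alpha> \<beta>] kj kn by (simp add: b_def)
  qed
  have r2: "m * uu \<alpha> \<beta> (Suc n) (k+1) = (c + b*(kk+1))*(R-1)*W + b*(kk+1)*X"
    using uu_rec[of "k+1" n \<alpha> \<beta>] kn
    unfolding W_def X_def b_def c_def kk_def m_def R_def
    by (simp add: algebra_simps)
  have r3: "m * uu \<alpha> \<beta> (Suc n) k = (c + b*kk)*R*X + b*kk*Y"
    using uu_rec[of k n \<alpha> \<beta>] kn
    unfolding X_def Y_def b_def c_def kk_def m_def R_def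
    by (simp add: algebra_simps)
  have "(m * uu \<alpha> \<beta> (Suc n) (k-1)) * (m * uu \<alpha> \<beta> (Suc n) (k+1)) \<le> (m * uu \<alpha> \<beta> (Suc n) k)^2"
    unfolding r1 r2 r3
  proof (rule key[OF _ _ _ _ X0 Y0 Z0 W0 hW h2 h3])
    show "b > 0" unfolding b_def using bb by simp
    show "c \<ge> 0" unfolding c_def using a by simp
    show "kk \<ge> 1" unfolding kk_def using k1 by simp
    show "R \<ge> 1" unfolding R_def m_def kk_def using kn by simp
  qed
  hence "m^2 * (uu \<alpha> \<beta> (Suc n) (k-1) * uu \<alpha> \<beta> (Suc n) (k+1)) \<le> m^2 * (uu \<alpha> \<beta> (Suc n) k)^2"
    by (simp add: power2_eq_square algebra_simps)
  moreover have "m^2 > 0" unfolding m_def by simp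
  ultimately show ?case by simp
qed


theorem mainTheorem10:
  fixes \<alpha> \<beta> :: real and n k :: nat
  assumes "\<alpha> \<le> 0" and "\<beta> < 0" and "n \<ge> 2" and "1 \<le> k" and "k \<le> n - 1"
  shows "(S_ab \<alpha> \<beta> n k)^2 \<ge>
           (1 + 1 / real k) * (1 + 1 / real (n - k)) * S_ab \<alpha> \<beta> n (k + 1) * S_ab \<alpha> \<beta> n (k - 1)
         \<and> (S_ab \<alpha> \<beta> n k)^2 \<ge> S_ab \<alpha> \<beta> n (k + 1) * S_ab \<alpha> \<beta> n (k - 1)"
proof -
  have k1: "1 \<le> k" and kn: "k < n" using assms by auto
  obtain j where j: "k = Suc j" using k1 by (cases k) auto
  have LC: "uu \<alpha> \<beta> n (k-1) * uu \<alpha> \<beta> n (k+1) \<le> (uu \<alpha> \<beta> n k)^2"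
    using uu_LC[OF assms(1,2) k1 kn] .
  have A1: "real (k+1) * real (n choose (k+1)) = real (n - k) * real (n choose k)"
    using bin1[of k n] by (metis Suc_eq_plus1 of_nat_mult)
  have A2: "real (n - k + 1) * real (n choose j) = real k * real (n choose k)"
  proof -
    have "Suc j * (n choose Suc j) = (n - j) * (n choose j)" by (rule bin1)
    moreover have "n - j = n - k + 1" using j kn by simp
    ultimately show ?thesis using j by (metis of_nat_mult)
  qed
  have nk: "real (n - k) > 0" using kn by simp
  have kp: "real k > 0" using k1 by simp
  have F: "(1 + 1 / real k) * (1 + 1 / real (n - k)) * (real (n choose (k+1)) * real (n choose (k-1)))
      = real (n choose k) ^ 2"
  proof -
    have "(1 + 1 / real k) * (1 + 1 / real (n - k)) * (real (n choose (k+1)) * real (n choose (k-1)))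
       = ((real (k+1) * real (n choose (k+1))) / real (n - k)) * ((real (n - k + 1) * real (n choose j)) / real k)"
      using nk kp j by (simp add: field_simps)
    also have "\<dots> = real (n choose k) ^ 2" unfolding A1 A2 using nk kp by (simp add: power2_eq_square)
    finally show ?thesis .
  qed
  have first: "(1 + 1 / real k) * (1 + 1 / real (n - k)) * S_ab \<alpha> \<beta> n (k + 1) * S_ab \<alpha> \<beta> n (k - 1)
      \<le> (S_ab \<alpha> \<beta> n k)^2"
  proof -
    have "(1 + 1 / real k) * (1 + 1 / real (n - k)) * S_ab \<alpha> \<beta> n (k + 1) * S_ab \<alpha> \<beta> n (k - 1)
        = ((1 + 1 / real k) * (1 + 1 / real (n - k)) * (real (n choose (k+1)) * real (n choose (k-1))))
          * (uu \<alpha> \<beta> n (k-1) * uu \<alpha> \<beta> n (k+1))"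
      unfolding S_uu by (simp add: algebra_simps)
    also have "\<dots> = real (n choose k) ^ 2 * (uu \<alpha> \<beta> n (k-1) * uu \<alpha> \<beta> n (k+1))" unfolding F ..
    also have "\<dots> \<le> real (n choose k) ^ 2 * (uu \<alpha> \<beta> n k)^2"
      by (rule mult_left_mono[OF LC]) simp
    also have "\<dots> = (S_ab \<alpha> \<beta> n k)^2" unfolding S_uu by (simp add: power_mult_distrib)
    finally show ?thesis .
  qed
  have fac: "(1 + 1 / real k) * (1 + 1 / real (n - k)) \<ge> 1"
  proof -
    have "1 + 1 / real k \<ge> 1" "1 + 1 / real (n - k) \<ge> 1" by auto
    thus ?thesis using one_le_mult_iff order_trans by (metis mult_mono zero_le_one mult_1_left)
  qed
  have pr: "S_ab \<alpha> \<beta> n (k + 1) * S_ab \<alpha> \<beta> n (k - 1) \<ge> 0"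
    using S_nonneg[OF assms(1,2)] by simp
  have "S_ab \<alpha> \<beta> n (k + 1) * S_ab \<alpha> \<beta> n (k - 1)
      \<le> (1 + 1 / real k) * (1 + 1 / real (n - k)) * (S_ab \<alpha> \<beta> n (k + 1) * S_ab \<alpha> \<beta> n (k - 1))"
    using mult_right_mono[OF fac pr] by simp
  with first show ?thesis by (simp add: mult.assoc)
qed

end
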